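(* Let $\hat q$ be an $n\times n$ parametric matrix and $\hat p$ an $n\times n$ parametric matrix, and let $M$ be an $n\times n$ $(\hat q,\hat p)$-Manin matrix with entries in $\mathfrak R$. Then for every multi-index $I=(i_1,\dots,i_n)$ with entries in $\{1,\dots,n\}$, $$\sum_{\sigma\in S_n}\varepsilon(\hat q,\sigma)\,M_{\sigma(1),i_1}M_{\sigma(2),i_2}\cdots M_{\sigma(n),i_n}=\varepsilon(\hat p,I)\,\mathrm{cdet}_{\hat q}(M).$$
   Context: $\mathfrak R$ is an associative unital algebra over $\mathbb C$. A parametric $n\times n$ matrix is a matrix $\hat q=(q_{ij})$ of nonzero complex numbers with $q_{ij}q_{ji}=1$ and $q_{ii}=1$. For parametric matrices $\hat q$ ($n\times n$) and $\hat p$ ($m\times m$), an $n\times m$ matrix $M=(M_{ij})$ with entries in $\mathfrak R$ is a $(\hat q,\hat p)$-Manin matrix if $M_{ik}M_{jk}=q_{ji}M_{jk}M_{ik}$ for all $1\le i<j\le n$, $1\le k\le m$, and $M_{ik}M_{jl}-q_{ji}p_{kl}M_{jl}M_{ik}+p_{kl}M_{il}M_{jk}-q_{ji}M_{jk}M_{il}=0$ for all $i<j$, $k<l$. For a multi-index $I=(i_1,\dots,i_r)$, $\varepsilon(\hat q,I)=0$ if two entries of $I$ coincide, and otherwise $\varepsilon(\hat q,I)=\prod_{s<t,\ i_s>i_t}(-q_{i_si_t})$. For $\sigma\in S_n$, $\varepsilon(\hat q,\sigma)=\prod_{s<t,\ \sigma(s)>\sigma(t)}(-q_{\sigma(s)\sigma(t)})$.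 The column $\hat q$-determinant of an $n\times n$ matrix $M$ is $\mathrm{cdet}_{\hat q}(M)=\sum_{\sigma\in S_n}\varepsilon(\hat q,\sigma)M_{\sigma(1),1}\cdots M_{\sigma(n),n}$. *)

theory Defs
  imports Complex_Main "HOL-Combinatorics.Permutations"
begin

text \<open>Indices are 0-based: {1..n} of the paper is rendered as {..<n}.
  The unital associative C-algebra R is a type 'a :: ring_1 together with a
  unital ring homomorphism emb : C -> R whose image is central (scalars).\<close>

definition c_algebra_emb :: "(complex \<Rightarrow> 'a::ring_1) \<Rightarrow> bool" where
  "c_algebra_emb emb \<longleftrightarrow> emb 1 = 1 \<and>
     (\<forall>a b. emb (a + b) = emb a + emb b) \<and>
     (\<forall>a b. emb (a * b) = emb a * emb b) \<and>
     (\<forall>a x. emb a * x = x * emb a)"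

definition parametric_matrix :: "nat \<Rightarrow> (nat \<Rightarrow> nat \<Rightarrow> complex) \<Rightarrow> bool" where
  "parametric_matrix n q \<longleftrightarrow> (\<forall>i<n. \<forall>j<n. q i j \<noteq> 0 \<and> q i j * q j i = 1) \<and> (\<forall>i<n. q i i = 1)"

definition manin ::
  "(complex \<Rightarrow> 'a::ring_1) \<Rightarrow> nat \<Rightarrow> nat \<Rightarrow> (nat \<Rightarrow> nat \<Rightarrow> complex) \<Rightarrow> (nat \<Rightarrow> nat \<Rightarrow> complex)
     \<Rightarrow> (nat \<Rightarrow> nat \<Rightarrow> 'a) \<Rightarrow> bool" where
  "manin emb n m q p M \<longleftrightarrow>
     (\<forall>i j k. i < j \<and> j < n \<and> k < m \<longrightarrow>
        M i k * M j k = emb (q j i) * M j k * M i k) \<and>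
     (\<forall>i j k l. i < j \<and> j < n \<and> k < l \<and> l < m \<longrightarrow>
        M i k * M j l - emb (q j i * p k l) * M j l * M i k
        + emb (p k l) * M i l * M j k - emb (q j i) * M j k * M i l = 0)"

definition eps :: "(nat \<Rightarrow> nat \<Rightarrow> complex) \<Rightarrow> nat \<Rightarrow> (nat \<Rightarrow> nat) \<Rightarrow> complex" where
  "eps q r I = (if inj_on I {..<r} then
      (\<Prod>(s,t)\<in>{(s,t). s < t \<and> t < r \<and> I t < I s}. - q (I s) (I t)) else 0)"

definition cdet :: "(complex \<Rightarrow> 'a::ring_1) \<Rightarrow> (nat \<Rightarrow> nat \<Rightarrow> complex) \<Rightarrow> nat
     \<Rightarrow> (nat \<Rightarrow> nat \<Rightarrow> 'a) \<Rightarrow> 'a" where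
  "cdet emb q n M = (\<Sum>\<sigma> | \<sigma> permutes {..<n}.
      emb (eps q n \<sigma>) * prod_list (map (\<lambda>k. M (\<sigma> k) k) [0..<n]))"

end

theory Submission
  imports Defs
begin

lemma emb_central: "c_algebra_emb emb \<Longrightarrow> emb a * x = x * emb a"
  unfolding c_algebra_emb_def by blast
lemma emb_mult: "c_algebra_emb emb \<Longrightarrow> emb (a * b) = emb a * emb b"
  unfolding c_algebra_emb_def by blast
lemma emb_add: "c_algebra_emb emb \<Longrightarrow> emb (a + b) = emb a + emb b"
  unfolding c_algebra_emb_def by blast
lemma emb_one: "c_algebra_emb emb \<Longrightarrow> emb 1 = 1"
  unfolding c_algebra_emb_def by blast
lemma emb_zero: "c_algebra_emb emb \<Longrightarrow> emb 0 = 0"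
  using emb_add[of emb 0 0] by simp
lemma emb_uminus: "c_algebra_emb emb \<Longrightarrow> emb (- a) = - emb a"
proof -
  assume h: "c_algebra_emb emb"
  have "emb a + emb (-a) = 0" using emb_add[OF h, of a "-a"] emb_zero[OF h] by simp
  then show ?thesis by (simp add: neg_eq_iff_add_eq_0[symmetric])
qed

definition Inv :: "nat \<Rightarrow> (nat \<Rightarrow> nat) \<Rightarrow> (nat \<times> nat) set" where
  "Inv n I = {(s,t). s < t \<and> t < n \<and> I t < I s}"

lemma finite_Inv: "finite (Inv n I)"
  by (rule finite_subset[of _ "{..<n} \<times> {..<n}"]) (auto simp: Inv_def)

lemma eps_Inv: "eps q n I = (if inj_on I {..<n} then (\<Prod>(s,t)\<in>Inv n I. - q (I s) (I t)) else 0)"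
  by (simp add: eps_def Inv_def)

definition tau :: "nat \<Rightarrow> nat \<Rightarrow> nat" where "tau s = transpose s (Suc s)"

lemma tau_simps: "tau s s = Suc s" "tau s (Suc s) = s" "k \<noteq> s \<Longrightarrow> k \<noteq> Suc s \<Longrightarrow> tau s k = k"
  by (auto simp: tau_def transpose_def)

lemma tau_tau: "tau s (tau s k) = k"
  by (auto simp: tau_def transpose_def)

lemma tau_permutes: "Suc s < n \<Longrightarrow> tau s permutes {..<n}"
  unfolding tau_def by (rule permutes_swap_id) auto

lemma tau_mono: "a < b \<Longrightarrow> (a, b) \<noteq> (s, Suc s) \<Longrightarrow> tau s a < tau s b"
  unfolding tau_def transpose_def by auto

lemma tau_lt: "Suc s < n \<Longrightarrow> b < n \<Longrightarrow> tau s b < n"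
  unfolding tau_def transpose_def by auto

lemma Inv_swap:
  assumes "Suc s < n" "K s < K (Suc s)"
  shows "Inv n (K \<circ> tau s) = insert (s, Suc s) ((\<lambda>(a,b). (tau s a, tau s b)) ` Inv n K)"
    and "(s, Suc s) \<notin> Inv n K"
    and "inj_on (\<lambda>(a,b). (tau s a, tau s b)) (Inv n K)"
proof -
  show "(s, Suc s) \<notin> Inv n K" using assms by (auto simp: Inv_def)
  show "inj_on (\<lambda>(a,b). (tau s a, tau s b)) (Inv n K)"
  proof (rule inj_onI, clarify)
    fix a b c d assume "tau s a = tau s c" "tau s b = tau s d"
    then show "a = c \<and> b = d" by (metis tau_tau)
  qed
  show "Inv n (K \<circ> tau s) = insert (s, Suc s) ((\<lambda>(a,b). (tau s a, tau s b)) ` Inv n K)"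
  proof (rule set_eqI, rule iffI)
    fix x assume "x \<in> Inv n (K \<circ> tau s)"
    then obtain a b where x: "x = (a,b)" "a < b" "b < n" "K (tau s b) < K (tau s a)"
      by (auto simp: Inv_def)
    show "x \<in> insert (s, Suc s) ((\<lambda>(a,b). (tau s a, tau s b)) ` Inv n K)"
    proof (cases "x = (s, Suc s)")
      case False
      have "(tau s a, tau s b) \<in> Inv n K"
        using x False assms tau_mono[of a b s] tau_lt[of s n b] by (auto simp: Inv_def)
      then show ?thesis using x tau_tau[of s a] tau_tau[of s b]
        by (auto intro!: image_eqI[where x="(tau s a, tau s b)"])
    qed simp
  next
    fix x assume "x \<in> insert (s, Suc s) ((\<lambda>(a,b). (tau s a, tau s b)) ` Inv n K)"
    then consider "x = (s, Suc s)" | a b where "x = (tau s a, tau s b)" "a < b" "b < n" "K b < K a"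
      by (auto simp: Inv_def)
    then show "x \<in> Inv n (K \<circ> tau s)"
    proof cases
      case 1 then show ?thesis using assms by (simp add: Inv_def tau_simps)
    next
      case 2
      have "(a, b) \<noteq> (s, Suc s)" using 2 assms by auto
      then have "tau s a < tau s b" using 2 tau_mono by auto
      moreover have "tau s b < n" using 2 assms tau_lt by auto
      ultimately show ?thesis using 2 by (simp add: Inv_def tau_tau)
    qed
  qed
qed

lemma inj_tau_iff:
  assumes "Suc s < n"
  shows "inj_on (K \<circ> tau s) {..<n} = inj_on K {..<n}"
proof -
  have p: "tau s permutes {..<n}" using tau_permutes[OF assms] .
  have "inj_on (tau s) {..<n}" using permutes_inj_on[OF p] .
  then have "inj_on K (tau s ` {..<n}) = inj_on (K \<circ> tau s) {..<n}" by (rule comp_inj_on_iff)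
  then show ?thesis using permutes_image[OF p] by simp
qed

lemma notin_img: "(s, Suc s) \<notin> (\<lambda>(a,b). (tau s a, tau s b)) ` Inv n K"
proof
  assume "(s, Suc s) \<in> (\<lambda>(a,b). (tau s a, tau s b)) ` Inv n K"
  then obtain a b where "(a,b) \<in> Inv n K" "tau s a = s" "tau s b = Suc s" by auto
  then have "a < b" "a = Suc s" "b = s" using tau_tau[of s a] tau_tau[of s b] tau_simps
    by (auto simp: Inv_def)
  then show False by simp
qed

lemma card_Inv_swap:
  assumes "Suc s < n" "K s < K (Suc s)"
  shows "card (Inv n (K \<circ> tau s)) = Suc (card (Inv n K))"
  using Inv_swap[OF assms] finite_Inv[of n K] notin_img[of s n K] by (simp add: card_image)

lemma eps_swap:
  assumes "Suc s < n" "K s < K (Suc s)"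
  shows "eps q n (K \<circ> tau s) = - q (K (Suc s)) (K s) * eps q n K"
proof (cases "inj_on K {..<n}")
  case False
  then show ?thesis using inj_tau_iff[OF assms(1), of K] by (simp add: eps_Inv)
next
  case True
  let ?h = "\<lambda>(a,b). (tau s a, tau s b)"
  have "(\<Prod>(a,b)\<in>Inv n (K \<circ> tau s). - q ((K \<circ> tau s) a) ((K \<circ> tau s) b))
      = - q (K (Suc s)) (K s) * (\<Prod>(a,b)\<in>?h ` Inv n K. - q ((K \<circ> tau s) a) ((K \<circ> tau s) b))"
    using Inv_swap[OF assms] finite_Inv[of n K] notin_img[of s n K] by (simp add: tau_simps)
  also have "(\<Prod>(a,b)\<in>?h ` Inv n K. - q ((K \<circ> tau s) a) ((K \<circ> tau s) b))
      = (\<Prod>(a,b)\<in>Inv n K. - q (K a) (K b))"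
    by (subst prod.reindex[OF Inv_swap(3)[OF assms]]) (simp add: case_prod_beta tau_tau)
  finally show ?thesis using True inj_tau_iff[OF assms(1), of K] by (simp add: eps_Inv comp_def)
qed

lemma cen_mid:
  fixes c :: "'a::ring_1"
  assumes c: "\<And>x. c * x = x * c" shows "X * (c * V) * Y = c * (X * V * Y)"
proof -
  have "X * (c * V) * Y = X * (c * (V * Y))" by (simp only: mult.assoc)
  also have "\<dots> = X * ((V * Y) * c)" by (simp only: c)
  also have "\<dots> = (X * V * Y) * c" by (simp only: mult.assoc)
  also have "\<dots> = c * (X * V * Y)" by (rule c[symmetric])
  finally show ?thesis .
qed

lemma cen_swap:
  assumes c: "\<And>x. c * x = x * c" shows "(e::'a::ring_1) * (c * W) = c * (e * W)"
proof -
  have "e * (c * W) = (e * c) * W" by (simp only: mult.assoc)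
  also have "\<dots> = (c * e) * W" by (simp only: c[of e])
  also have "\<dots> = c * (e * W)" by (simp only: mult.assoc)
  finally show ?thesis .
qed

lemma alg1:
  fixes c e :: "'a::ring_1"
  assumes c: "\<And>x. c * x = x * c" and e: "\<And>x. e * x = x * e" and U: "U = c * V"
  shows "e * (X * U * Y) + (- (c * e)) * (X * V * Y) = 0"
proof -
  have "e * (X * U * Y) = c * e * (X * V * Y)"
    using U cen_mid[OF c] cen_swap[OF c] by (simp add: mult.assoc)
  then show ?thesis by simp
qed

lemma alg2:
  fixes c d e :: "'a::ring_1"
  assumes c: "\<And>x. c * x = x * c" and d: "\<And>x. d * x = x * d" and e: "\<And>x. e * x = x * e"
    and rel: "a1 - c * (d * b2) + d * b1 - c * a2 = 0"
  shows "e * (X * a1 * Y) + (- (c * e)) * (X * a2 * Y)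
       = (- d) * (e * (X * b1 * Y) + (- (c * e)) * (X * b2 * Y))"
proof -
  have md: "\<And>x. (-d) * x = x * (-d)" using d by simp
  have r: "a1 - c * a2 = (-d) * (b1 - c * b2)"
  proof -
    have "d * (c * b2) = c * (d * b2)" using cen_swap[OF c] .
    then show ?thesis using rel by (simp add: algebra_simps)
  qed
  have "e * (X * a1 * Y) + (- (c * e)) * (X * a2 * Y) = e * (X * a1 * Y) - e * (X * (c * a2) * Y)"
    using cen_mid[OF c, of X a2 Y] cen_swap[OF c] by (simp add: mult.assoc)
  also have "\<dots> = e * (X * (a1 - c * a2) * Y)" by (simp add: algebra_simps)
  also have "\<dots> = e * (X * ((-d) * (b1 - c * b2)) * Y)" using r by simp
  also have "\<dots> = (-d) * (e * (X * (b1 - c * b2) * Y))"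
    using cen_mid[OF md] cen_swap[OF md] by simp
  also have "\<dots> = (-d) * (e * (X * b1 * Y) - e * (X * (c * b2) * Y))" by (simp add: algebra_simps)
  also have "\<dots> = (- d) * (e * (X * b1 * Y) + (- (c * e)) * (X * b2 * Y))"
    using cen_mid[OF c, of X b2 Y] cen_swap[OF c] by (simp add: mult.assoc)
  finally show ?thesis .
qed

lemma prod_split:
  assumes "Suc s < n"
  shows "prod_list (map f [0..<n]) = prod_list (map f [0..<s]) * (f s * f (Suc s)) * prod_list (map f [Suc (Suc s)..<n])"
proof -
  have "[0..<n] = [0..<s] @ [s..<n]" using assms
    by (metis le_add1 le_add_diff_inverse less_imp_le_nat Suc_lessD upt_add_eq_append zero_le)
  also have "[s..<n] = s # Suc s # [Suc (Suc s)..<n]" using assms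
    by (simp add: upt_conv_Cons)
  finally show ?thesis by (simp add: mult.assoc)
qed

lemma prod_split_gen:
  assumes "Suc s < n" "\<And>k. k \<noteq> s \<Longrightarrow> k \<noteq> Suc s \<Longrightarrow> f k = g k"
  shows "prod_list (map f [0..<n]) = prod_list (map g [0..<s]) * (f s * f (Suc s)) * prod_list (map g [Suc (Suc s)..<n])"
proof -
  have e1: "map f [0..<s] = map g [0..<s]" using assms(2) by (intro map_cong) auto
  have e2: "map f [Suc (Suc s)..<n] = map g [Suc (Suc s)..<n]" using assms(2) by (intro map_cong) auto
  show ?thesis unfolding prod_split[OF assms(1), of f] e1 e2 by (rule refl)
qed

lemma sum_pair:
  assumes "Suc s < n"
  shows "(\<Sum>\<sigma> | \<sigma> permutes {..<n}. g \<sigma>)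
       = (\<Sum>\<sigma> | \<sigma> permutes {..<n} \<and> \<sigma> s < \<sigma> (Suc s). g \<sigma> + g (\<sigma> \<circ> tau s))"
proof -
  let ?S = "{\<sigma>. \<sigma> permutes {..<n}}"
  let ?A = "{\<sigma>. \<sigma> permutes {..<n} \<and> \<sigma> s < \<sigma> (Suc s)}"
  let ?B = "{\<sigma>. \<sigma> permutes {..<n} \<and> \<sigma> (Suc s) < \<sigma> s}"
  have fin: "finite ?S" by (rule finite_permutations) simp
  have tp: "tau s permutes {..<n}" using tau_permutes[OF assms] .
  have SAB: "?S = ?A \<union> ?B"
  proof (rule set_eqI, rule iffI)
    fix \<sigma> assume h: "\<sigma> \<in> ?S"
    then have p: "\<sigma> permutes {..<n}" by simp
    have "\<sigma> s \<noteq> \<sigma> (Suc s)"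
    proof
      assume "\<sigma> s = \<sigma> (Suc s)"
      then have "s = Suc s" using injD[OF permutes_inj[OF p]] by blast
      then show False by simp
    qed
    then have "\<sigma> s < \<sigma> (Suc s) \<or> \<sigma> (Suc s) < \<sigma> s" by linarith
    then show "\<sigma> \<in> ?A \<union> ?B" using p by blast
  next
    fix \<sigma> assume "\<sigma> \<in> ?A \<union> ?B"
    then show "\<sigma> \<in> ?S" by blast
  qed
  have disj: "?A \<inter> ?B = {}" by auto
  have inj: "inj_on (\<lambda>\<sigma>. \<sigma> \<circ> tau s) ?A"
  proof (rule inj_onI)
    fix x y assume "x \<circ> tau s = y \<circ> tau s"
    then have "\<And>k. x (tau s (tau s k)) = y (tau s (tau s k))" by (metis comp_apply)
    then show "x = y" by (simp add: tau_tau fun_eq_iff)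
  qed
  have Bimg: "?B = (\<lambda>\<sigma>. \<sigma> \<circ> tau s) ` ?A"
  proof (rule set_eqI, rule iffI)
    fix \<sigma> assume h: "\<sigma> \<in> ?B"
    have "\<sigma> permutes {..<n}" "\<sigma> (Suc s) < \<sigma> s" using h by simp_all
    then have "\<sigma> \<circ> tau s \<in> ?A" using permutes_compose[OF tp, of \<sigma>] by (simp add: tau_simps)
    moreover have "\<sigma> = (\<sigma> \<circ> tau s) \<circ> tau s" by (simp add: fun_eq_iff tau_tau)
    ultimately show "\<sigma> \<in> (\<lambda>\<sigma>. \<sigma> \<circ> tau s) ` ?A" by blast
  next
    fix \<sigma> assume "\<sigma> \<in> (\<lambda>\<sigma>. \<sigma> \<circ> tau s) ` ?A"
    then obtain \<rho> where "\<rho> \<in> ?A" "\<sigma> = \<rho> \<circ> tau s" by blast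
    then have "\<rho> permutes {..<n}" "\<rho> s < \<rho> (Suc s)" "\<sigma> = \<rho> \<circ> tau s" by simp_all
    then show "\<sigma> \<in> ?B" using permutes_compose[OF tp, of \<rho>] by (simp add: tau_simps)
  qed
  have "sum g ?S = sum g ?A + sum g ?B"
  proof -
    have finA: "finite ?A" by (rule finite_subset[OF _ fin]) blast
    have finB: "finite ?B" by (rule finite_subset[OF _ fin]) blast
    show ?thesis unfolding SAB by (rule sum.union_disjoint[OF finA finB disj])
  qed
  also have "sum g ?B = sum (\<lambda>\<sigma>. g (\<sigma> \<circ> tau s)) ?A"
    unfolding Bimg by (subst sum.reindex[OF inj]) (simp add: comp_def)
  finally show ?thesis by (simp add: sum.distrib)
qed

definition F :: "(complex \<Rightarrow> 'a::ring_1) \<Rightarrow> (nat \<Rightarrow> nat \<Rightarrow> complex) \<Rightarrow> nat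
     \<Rightarrow> (nat \<Rightarrow> nat \<Rightarrow> 'a) \<Rightarrow> (nat \<Rightarrow> nat) \<Rightarrow> 'a" where
  "F emb q n M I = (\<Sum>\<sigma> | \<sigma> permutes {..<n}.
      emb (eps q n \<sigma>) * prod_list (map (\<lambda>k. M (\<sigma> k) (I k)) [0..<n]))"

lemma perm_A_facts:
  assumes "\<sigma> permutes {..<n}" "Suc s < n"
  shows "\<sigma> s < n" "\<sigma> (Suc s) < n"
  using assms permutes_in_image[OF assms(1)] by auto

lemma F_zero:
  fixes emb :: "complex \<Rightarrow> 'a::ring_1"
  assumes emb: "c_algebra_emb emb" and man: "manin emb n n q p M"
    and s: "Suc s < n" and eq: "I s = I (Suc s)" and lt: "I (Suc s) < n"
  shows "F emb q n M I = 0"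
proof -
  have "F emb q n M I = (\<Sum>\<sigma> | \<sigma> permutes {..<n} \<and> \<sigma> s < \<sigma> (Suc s).
      emb (eps q n \<sigma>) * prod_list (map (\<lambda>k. M (\<sigma> k) (I k)) [0..<n])
    + emb (eps q n (\<sigma> \<circ> tau s)) * prod_list (map (\<lambda>k. M ((\<sigma> \<circ> tau s) k) (I k)) [0..<n]))"
    unfolding F_def by (rule sum_pair[OF s])
  also have "\<dots> = 0"
  proof (rule sum.neutral, rule ballI)
    fix \<sigma> assume "\<sigma> \<in> {\<sigma>. \<sigma> permutes {..<n} \<and> \<sigma> s < \<sigma> (Suc s)}"
    then have p: "\<sigma> permutes {..<n}" and ij: "\<sigma> s < \<sigma> (Suc s)" by auto
    define i j k where "i = \<sigma> s" and "j = \<sigma> (Suc s)" and "k = I s"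
    define g where "g = (\<lambda>k. M (\<sigma> k) (I k))"
    define X where "X = prod_list (map g [0..<s])"
    define Y where "Y = prod_list (map g [Suc (Suc s)..<n])"
    have jn: "j < n" using perm_A_facts[OF p s] j_def by simp
    have kn: "k < n" using lt eq k_def by simp
    have P1: "prod_list (map (\<lambda>k. M (\<sigma> k) (I k)) [0..<n]) = X * (M i k * M j k) * Y"
      unfolding X_def Y_def g_def i_def j_def k_def using prod_split[OF s, of "\<lambda>k. M (\<sigma> k) (I k)"] eq by simp
    have P2: "prod_list (map (\<lambda>k. M ((\<sigma> \<circ> tau s) k) (I k)) [0..<n]) = X * (M j k * M i k) * Y"
      unfolding X_def Y_def i_def j_def k_def
      by (subst prod_split_gen[OF s, where g = g]) (auto simp: g_def tau_simps eq)
    have E: "emb (eps q n (\<sigma> \<circ> tau s)) = - (emb (q j i) * emb (eps q n \<sigma>))"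
      using eps_swap[OF s ij, of q] emb_uminus[OF emb] emb_mult[OF emb] i_def j_def by simp
    have U: "M i k * M j k = emb (q j i) * (M j k * M i k)"
      using man ij jn kn i_def j_def unfolding manin_def by (simp add: mult.assoc)
    show "emb (eps q n \<sigma>) * prod_list (map (\<lambda>k. M (\<sigma> k) (I k)) [0..<n])
    + emb (eps q n (\<sigma> \<circ> tau s)) * prod_list (map (\<lambda>k. M ((\<sigma> \<circ> tau s) k) (I k)) [0..<n]) = 0"
      unfolding P1 P2 E
      by (rule alg1[OF emb_central[OF emb] emb_central[OF emb] U])
  qed
  finally show ?thesis .
qed

lemma F_swap:
  fixes emb :: "complex \<Rightarrow> 'a::ring_1"
  assumes emb: "c_algebra_emb emb" and man: "manin emb n n q p M"
    and s: "Suc s < n" and kl: "I s < I (Suc s)" and lt: "I (Suc s) < n"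
  shows "F emb q n M I = emb (- p (I s) (I (Suc s))) * F emb q n M (I \<circ> tau s)"
proof -
  let ?A = "{\<sigma>. \<sigma> permutes {..<n} \<and> \<sigma> s < \<sigma> (Suc s)}"
  let ?G = "\<lambda>J \<sigma>. emb (eps q n \<sigma>) * prod_list (map (\<lambda>k. M (\<sigma> k) (J k)) [0..<n])
    + emb (eps q n (\<sigma> \<circ> tau s)) * prod_list (map (\<lambda>k. M ((\<sigma> \<circ> tau s) k) (J k)) [0..<n])"
  have FI: "F emb q n M I = (\<Sum>\<sigma>\<in>?A. ?G I \<sigma>)"
    unfolding F_def by (rule sum_pair[OF s])
  have FJ: "F emb q n M (I \<circ> tau s) = (\<Sum>\<sigma>\<in>?A. ?G (I \<circ> tau s) \<sigma>)"
    unfolding F_def by (rule sum_pair[OF s])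
  have "(\<Sum>\<sigma>\<in>?A. ?G I \<sigma>) = (\<Sum>\<sigma>\<in>?A. emb (- p (I s) (I (Suc s))) * ?G (I \<circ> tau s) \<sigma>)"
  proof (rule sum.cong[OF refl])
    fix \<sigma> assume "\<sigma> \<in> ?A"
    then have p: "\<sigma> permutes {..<n}" and ij: "\<sigma> s < \<sigma> (Suc s)" by auto
    define i j k l where "i = \<sigma> s" and "j = \<sigma> (Suc s)" and "k = I s" and "l = I (Suc s)"
    define g where "g = (\<lambda>k. M (\<sigma> k) (I k))"
    define X where "X = prod_list (map g [0..<s])"
    define Y where "Y = prod_list (map g [Suc (Suc s)..<n])"
    have jn: "j < n" using perm_A_facts[OF p s] j_def by simp
    have ln: "l < n" using lt l_def by simp
    have P1: "prod_list (map (\<lambda>k. M (\<sigma> k) (I k)) [0..<n]) = X * (M i k * M j l) * Y"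
      unfolding X_def Y_def g_def i_def j_def k_def l_def
      using prod_split[OF s, of "\<lambda>k. M (\<sigma> k) (I k)"] by simp
    have P2: "prod_list (map (\<lambda>k. M ((\<sigma> \<circ> tau s) k) (I k)) [0..<n]) = X * (M j k * M i l) * Y"
      unfolding X_def Y_def i_def j_def k_def l_def
      by (subst prod_split_gen[OF s, where g = g]) (auto simp: g_def tau_simps)
    have P3: "prod_list (map (\<lambda>k. M (\<sigma> k) ((I \<circ> tau s) k)) [0..<n]) = X * (M i l * M j k) * Y"
      unfolding X_def Y_def i_def j_def k_def l_def
      by (subst prod_split_gen[OF s, where g = g]) (auto simp: g_def tau_simps)
    have P4: "prod_list (map (\<lambda>k. M ((\<sigma> \<circ> tau s) k) ((I \<circ> tau s) k)) [0..<n]) = X * (M j l * M i k) * Y"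
      unfolding X_def Y_def i_def j_def k_def l_def
      by (subst prod_split_gen[OF s, where g = g]) (auto simp: g_def tau_simps)
    have E: "emb (eps q n (\<sigma> \<circ> tau s)) = - (emb (q j i) * emb (eps q n \<sigma>))"
      using eps_swap[OF s ij, of q] emb_uminus[OF emb] emb_mult[OF emb] i_def j_def by simp
    have D: "emb (- p (I s) (I (Suc s))) = - emb (p k l)"
      using emb_uminus[OF emb] k_def l_def by simp
    have rel: "M i k * M j l - emb (q j i) * (emb (p k l) * (M j l * M i k)) + emb (p k l) * (M i l * M j k)
       - emb (q j i) * (M j k * M i l) = 0"
      using man ij jn ln kl i_def j_def k_def l_def unfolding manin_def
      by (simp add: mult.assoc emb_mult[OF emb])
    show "?G I \<sigma> = emb (- p (I s) (I (Suc s))) * ?G (I \<circ> tau s) \<sigma>"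
      unfolding P1 P2 P3 P4 E D
      by (rule alg2[OF emb_central[OF emb] emb_central[OF emb] emb_central[OF emb] rel])
  qed
  then show ?thesis unfolding FI FJ by (simp add: sum_distrib_left)
qed

lemma adj_sorted:
  fixes I :: "nat \<Rightarrow> nat"
  assumes "\<And>s. Suc s < n \<Longrightarrow> I s \<le> I (Suc s)"
  shows "a \<le> b \<Longrightarrow> b < n \<Longrightarrow> I a \<le> I b"
proof (induction b)
  case 0 then show ?case by simp
next
  case (Suc b)
  show ?case
  proof (cases "a = Suc b")
    case False
    then have "I a \<le> I b" using Suc by simp
    also have "I b \<le> I (Suc b)" using assms Suc.prems by simp
    finally show ?thesis .
  qed simp
qed

lemma adj_strict:
  fixes I :: "nat \<Rightarrow> nat"
  assumes "\<And>s. Suc s < n \<Longrightarrow> I s < I (Suc s)"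
  shows "a < b \<Longrightarrow> b < n \<Longrightarrow> I a < I b"
proof (induction b)
  case 0 then show ?case by simp
next
  case (Suc b)
  show ?case
  proof (cases "a = b")
    case False
    then have "I a < I b" using Suc by simp
    also have "I b < I (Suc b)" using assms Suc.prems by simp
    finally show ?thesis .
  next
    case True then show ?thesis using assms Suc.prems by simp
  qed
qed

lemma strict_id:
  assumes "\<And>s. Suc s < n \<Longrightarrow> I s < I (Suc s)" and bnd: "\<forall>k<n. I k < n" and k: "k < n"
  shows "I k = k"
proof -
  have lo: "\<And>k. k < n \<Longrightarrow> k \<le> I k"
  proof -
    fix k show "k < n \<Longrightarrow> k \<le> I k"
    proof (induction k)
      case (Suc k)
      then have "k \<le> I k" by simp
      also have "I k < I (Suc k)" using assms(1) Suc.prems by simp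
      finally show ?case by simp
    qed simp
  qed
  have up: "\<And>d. d + k < n \<Longrightarrow> I k + d \<le> I (k + d)"
  proof -
    fix d show "d + k < n \<Longrightarrow> I k + d \<le> I (k + d)"
    proof (induction d)
      case (Suc d)
      then have "I k + d \<le> I (k + d)" by simp
      also have "I (k + d) < I (Suc (k + d))" using assms(1) Suc.prems by simp
      finally show ?case by simp
    qed simp
  qed
  have "I k + (n - 1 - k) \<le> I (k + (n - 1 - k))" using up[of "n - 1 - k"] k by simp
  moreover have "I (k + (n - 1 - k)) < n" using bnd k by simp
  ultimately have "I k \<le> k" using k by simp
  with lo[OF k] show ?thesis by simp
qed

lemma main_ind:
  fixes emb :: "complex \<Rightarrow> 'a::ring_1"
  assumes emb: "c_algebra_emb emb" and pp: "parametric_matrix n p" and man: "manin emb n n q p M"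
  shows "(\<forall>k<n. I k < n) \<Longrightarrow> card (Inv n I) = m \<Longrightarrow>
     F emb q n M I = emb (eps p n I) * F emb q n M (\<lambda>k. k)"
proof (induction m arbitrary: I rule: less_induct)
  case (less m)
  show ?case
  proof (cases "Inv n I = {}")
    case True
    have sorted: "\<And>a b. a < b \<Longrightarrow> b < n \<Longrightarrow> I a \<le> I b"
    proof -
      fix a b assume ab: "a < b" "b < n"
      have "(a, b) \<notin> Inv n I" using True by simp
      then show "I a \<le> I b" using ab by (simp add: Inv_def not_less)
    qed
    show ?thesis
    proof (cases "\<exists>s. Suc s < n \<and> I s = I (Suc s)")
      case True
      then obtain s where s: "Suc s < n" "I s = I (Suc s)" by blast
      have "F emb q n M I = 0" using F_zero[OF emb man s] less.prems(1) s(1) by simp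
      moreover have "\<not> inj_on I {..<n}"
      proof
        assume "inj_on I {..<n}"
        then have "s = Suc s" using s by (auto dest: inj_onD)
        then show False by simp
      qed
      ultimately show ?thesis by (simp add: eps_Inv emb_zero[OF emb])
    next
      case False
      then have adj: "\<And>s. Suc s < n \<Longrightarrow> I s < I (Suc s)"
        using sorted by (metis le_neq_implies_less lessI)
      have "inj_on I {..<n}"
      proof (rule inj_onI, rule ccontr)
        fix a b assume ab: "a \<in> {..<n}" "b \<in> {..<n}" "I a = I b" "a \<noteq> b"
        show False
        proof (cases "a < b")
          case True then show False using adj_strict[of n I a b, OF adj] ab by simp
        next
          case False then have "b < a" using ab by simp
          then show False using adj_strict[of n I b a, OF adj] ab by simp
        qed
      qed
      then have "eps p n I = 1" using True by (simp add: eps_Inv)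
      moreover have "F emb q n M I = F emb q n M (\<lambda>k. k)"
        unfolding F_def
        by (intro sum.cong refl arg_cong2[where f = "(*)"] arg_cong[where f = prod_list] map_cong)
           (use strict_id[of n I, OF adj less.prems(1)] in auto)
      ultimately show ?thesis by (simp add: emb_one[OF emb])
    qed
  next
    case False
    have "\<exists>s. Suc s < n \<and> I (Suc s) < I s"
    proof (rule ccontr)
      assume "\<not> ?thesis"
      then have "\<And>s. Suc s < n \<Longrightarrow> I s \<le> I (Suc s)" by (meson not_le)
      then have srt: "\<And>a b. a \<le> b \<Longrightarrow> b < n \<Longrightarrow> I a \<le> I b" using adj_sorted[of n I] by blast
      have "Inv n I = {}"
      proof (rule equals0I)
        fix x assume "x \<in> Inv n I"
        then obtain a b where "a < b" "b < n" "I b < I a" unfolding Inv_def by blast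
        then show False using srt[of a b] by simp
      qed
      with False show False by simp
    qed
    then obtain s where s: "Suc s < n" "I (Suc s) < I s" by blast
    define J where "J = I \<circ> tau s"
    have Js: "J s < J (Suc s)" using s by (simp add: J_def tau_simps)
    have JI: "J \<circ> tau s = I" by (simp add: J_def fun_eq_iff tau_tau)
    have Jb: "\<forall>k<n. J k < n" using less.prems(1) tau_lt[OF s(1)] by (simp add: J_def)
    have cardJ: "card (Inv n J) < m"
      using card_Inv_swap[OF s(1) Js] JI less.prems(2) by simp
    have IH: "F emb q n M J = emb (eps p n J) * F emb q n M (\<lambda>k. k)"
      using less.IH[OF cardJ Jb refl] .
    have a: "I s < n" "I (Suc s) < n" using less.prems(1) s by auto
    have FJ: "F emb q n M J = emb (- p (I (Suc s)) (I s)) * F emb q n M I"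
    proof -
      have Jv: "J s = I (Suc s)" "J (Suc s) = I s" by (simp_all add: J_def tau_simps)
      have Jlt: "J (Suc s) < n" using Jv a by simp
      show ?thesis using F_swap[OF emb man s(1) Js Jlt] unfolding JI Jv .
    qed
    have one: "emb (- p (I s) (I (Suc s))) * emb (- p (I (Suc s)) (I s)) = 1"
    proof -
      have "p (I s) (I (Suc s)) * p (I (Suc s)) (I s) = 1" using pp a unfolding parametric_matrix_def by blast
      then have "emb ((- p (I s) (I (Suc s))) * (- p (I (Suc s)) (I s))) = 1" using emb_one[OF emb] by simp
      then show ?thesis using emb_mult[OF emb] by metis
    qed
    have FI: "F emb q n M I = emb (- p (I s) (I (Suc s))) * F emb q n M J"
      unfolding FJ by (simp add: mult.assoc[symmetric] one)
    have epsI: "eps p n I = - p (I s) (I (Suc s)) * eps p n J"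
    proof -
      have Jv: "J s = I (Suc s)" "J (Suc s) = I s" by (simp_all add: J_def tau_simps)
      show ?thesis using eps_swap[OF s(1) Js, of p] unfolding JI Jv .
    qed
    show ?thesis unfolding FI IH epsI emb_mult[OF emb] by (simp only: mult.assoc)
  qed
qed

theorem mainTheorem1:
  fixes emb :: "complex \<Rightarrow> 'a::ring_1"
    and n :: nat and q p :: "nat \<Rightarrow> nat \<Rightarrow> complex" and M :: "nat \<Rightarrow> nat \<Rightarrow> 'a"
    and I :: "nat \<Rightarrow> nat"
  assumes "c_algebra_emb emb"
    and "parametric_matrix n q" and "parametric_matrix n p"
    and "manin emb n n q p M"
    and "\<forall>k<n. I k < n"
  shows "(\<Sum>\<sigma> | \<sigma> permutes {..<n}.
            emb (eps q n \<sigma>) * prod_list (map (\<lambda>k. M (\<sigma> k) (I k)) [0..<n]))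
         = emb (eps p n I) * cdet emb q n M"
proof -
  have "cdet emb q n M = F emb q n M (\<lambda>k. k)" by (simp add: cdet_def F_def)
  then show ?thesis using main_ind[OF assms(1,3,4) assms(5) refl] by (simp add: F_def)
qed

end
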